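(* Let $T:\mathcal{H}(\mathbb{D})\to\mathcal{H}(\mathbb{D})$ be a linear transformation, let $X\subset\mathcal{H}(\mathbb{D})$ be a Banach space, and let $v$ be a radial weight. For $z\in\mathbb{D}$ define the linear maps $(K_z^H)_T, (K_{z,1}^{\mathcal{B}})_T: X\to\mathbb{C}$ by $(K_z^H)_T(f)=Tf(z)$ and $(K_{z,1}^{\mathcal{B}})_T(f)=(Tf)'(z)$, and let $(K_0^{\mathcal{B}})_T(f)=Tf(0)$. Then: (i) $T$ maps $X$ boundedly into $H_v$ if and only if $(K_z^H)_T\in X^*$ for every $z\in\mathbb{D}$ and $\sup_{z\in\mathbb{D}} v(z)\,\|(K_z^H)_T\|<\infty$. (ii) $T$ maps $X$ boundedly into $\mathcal{B}_v$ if and only if $(K_0^{\mathcal{B}})_T\in X^*$, $(K_{z,1}^{\mathcal{B}})_T\in X^*$ for every $z\in\mathbb{D}$, and $\sup_{z\in\mathbb{D}} v(z)\,\|(K_{z,1}^{\mathcal{B}})_T\|<\infty$.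
   Context: $\mathbb{D}$ is the open unit disk and $\mathcal{H}(\mathbb{D})$ the space of holomorphic functions on $\mathbb{D}$. A weight is a continuous function $v:\mathbb{D}\to(0,1]$; it is radial if $v(z)=v(|z|)$. $H_v=\{f\in\mathcal{H}(\mathbb{D}):\|f\|_{H_v}=\sup_{z\in\mathbb{D}}v(z)|f(z)|<\infty\}$ and $\mathcal{B}_v=\{f\in\mathcal{H}(\mathbb{D}):\sup_{z\in\mathbb{D}}v(z)|f'(z)|<\infty\}$, the latter a Banach space with norm $|f(0)|+\sup_{z}v(z)|f'(z)|$. $X^*$ denotes the (continuous) dual of $X$, and $\|\cdot\|$ of a functional is its dual norm. *)

theory Defs
  imports "HOL-Analysis.Analysis"
begin

text \<open>The unit disk and holomorphic functions on it. Functions are represented as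
  total maps complex \<Rightarrow> complex; only their values on the disk matter.\<close>

abbreviation disk :: "complex set" where "disk \<equiv> ball 0 1"

definition holD :: "(complex \<Rightarrow> complex) set" where
  "holD = {f. f holomorphic_on disk}"

definition weight :: "(complex \<Rightarrow> real) \<Rightarrow> bool" where
  "weight v \<longleftrightarrow> continuous_on disk v \<and> (\<forall>z\<in>disk. 0 < v z \<and> v z \<le> 1)"

definition radial_weight :: "(complex \<Rightarrow> real) \<Rightarrow> bool" where
  "radial_weight v \<longleftrightarrow> weight v \<and> (\<forall>z\<in>disk. v z = v (complex_of_real (norm z)))"

definition Hv :: "(complex \<Rightarrow> real) \<Rightarrow> (complex \<Rightarrow> complex) set" where
  "Hv v = {f. f holomorphic_on disk \<and> bdd_above ((\<lambda>z. v z * norm (f z)) ` disk)}"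

definition Hv_norm :: "(complex \<Rightarrow> real) \<Rightarrow> (complex \<Rightarrow> complex) \<Rightarrow> real" where
  "Hv_norm v f = (SUP z\<in>disk. v z * norm (f z))"

definition Bv :: "(complex \<Rightarrow> real) \<Rightarrow> (complex \<Rightarrow> complex) set" where
  "Bv v = {f. f holomorphic_on disk \<and> bdd_above ((\<lambda>z. v z * norm (deriv f z)) ` disk)}"

definition Bv_norm :: "(complex \<Rightarrow> real) \<Rightarrow> (complex \<Rightarrow> complex) \<Rightarrow> real" where
  "Bv_norm v f = norm (f 0) + (SUP z\<in>disk. v z * norm (deriv f z))"

text \<open>A Banach space X \<subseteq> H(D) with norm N: a complex linear subspace of H(D), N a norm
  on it (functions agreeing on the disk are identified), and X complete w.r.t. N.\<close>

definition banach_subspace ::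
  "(complex \<Rightarrow> complex) set \<Rightarrow> ((complex \<Rightarrow> complex) \<Rightarrow> real) \<Rightarrow> bool" where
  "banach_subspace X N \<longleftrightarrow>
     X \<subseteq> holD \<and> (\<lambda>_. 0) \<in> X \<and>
     (\<forall>f\<in>X. \<forall>g\<in>X. (\<lambda>z. f z + g z) \<in> X) \<and>
     (\<forall>c. \<forall>f\<in>X. (\<lambda>z. c * f z) \<in> X) \<and>
     (\<forall>f\<in>X. 0 \<le> N f) \<and>
     (\<forall>f\<in>X. N f = 0 \<longleftrightarrow> (\<forall>z\<in>disk. f z = 0)) \<and>
     (\<forall>f\<in>X. \<forall>g\<in>X. N (\<lambda>z. f z + g z) \<le> N f + N g) \<and>
     (\<forall>c. \<forall>f\<in>X. N (\<lambda>z. c * f z) = norm c * N f) \<and>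
     (\<forall>s. (\<forall>n. s n \<in> X) \<longrightarrow>
          (\<forall>e>0. \<exists>M. \<forall>m\<ge>M. \<forall>n\<ge>M. N (\<lambda>z. s m z - s n z) < e) \<longrightarrow>
          (\<exists>f\<in>X. (\<lambda>n. N (\<lambda>z. s n z - f z)) \<longlonglongrightarrow> 0))"

text \<open>A linear transformation of H(D) (well defined on H(D), i.e. depending only
  on values on the disk, and with values in H(D)).\<close>

definition linear_HD :: "((complex \<Rightarrow> complex) \<Rightarrow> (complex \<Rightarrow> complex)) \<Rightarrow> bool" where
  "linear_HD T \<longleftrightarrow>
     (\<forall>f\<in>holD. T f \<in> holD) \<and>
     (\<forall>f\<in>holD. \<forall>g\<in>holD. (\<forall>z\<in>disk. f z = g z) \<longrightarrow> (\<forall>z\<in>disk. T f z = T g z)) \<and>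
     (\<forall>f\<in>holD. \<forall>g\<in>holD. \<forall>z\<in>disk. T (\<lambda>w. f w + g w) z = T f z + T g z) \<and>
     (\<forall>c. \<forall>f\<in>holD. \<forall>z\<in>disk. T (\<lambda>w. c * f w) z = c * T f z)"

definition in_dual ::
  "(complex \<Rightarrow> complex) set \<Rightarrow> ((complex \<Rightarrow> complex) \<Rightarrow> real) \<Rightarrow>
   ((complex \<Rightarrow> complex) \<Rightarrow> complex) \<Rightarrow> bool" where
  "in_dual X N \<phi> \<longleftrightarrow>
     (\<forall>f\<in>X. \<forall>g\<in>X. \<phi> (\<lambda>z. f z + g z) = \<phi> f + \<phi> g) \<and>
     (\<forall>c. \<forall>f\<in>X. \<phi> (\<lambda>z. c * f z) = c * \<phi> f) \<and>
     (\<exists>C. \<forall>f\<in>X. norm (\<phi> f) \<le> C * N f)"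

definition dual_norm ::
  "(complex \<Rightarrow> complex) set \<Rightarrow> ((complex \<Rightarrow> complex) \<Rightarrow> real) \<Rightarrow>
   ((complex \<Rightarrow> complex) \<Rightarrow> complex) \<Rightarrow> real" where
  "dual_norm X N \<phi> = (SUP f\<in>{f\<in>X. N f \<le> 1}. norm (\<phi> f))"

definition maps_boundedly ::
  "((complex \<Rightarrow> complex) \<Rightarrow> (complex \<Rightarrow> complex)) \<Rightarrow>
   (complex \<Rightarrow> complex) set \<Rightarrow> ((complex \<Rightarrow> complex) \<Rightarrow> real) \<Rightarrow>
   (complex \<Rightarrow> complex) set \<Rightarrow> ((complex \<Rightarrow> complex) \<Rightarrow> real) \<Rightarrow> bool" where
  "maps_boundedly T X N Y NY \<longleftrightarrow>
     (\<forall>f\<in>X. T f \<in> Y) \<and> (\<exists>C. \<forall>f\<in>X. NY (T f) \<le> C * N f)"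

end

theory Submission
  imports Defs
begin

lemma bs_facts:
  assumes "banach_subspace X N"
  shows "X \<subseteq> holD" "(\<lambda>_. 0) \<in> X" "\<And>c f. f \<in> X \<Longrightarrow> (\<lambda>z. c * f z) \<in> X"
    "\<And>f. f \<in> X \<Longrightarrow> 0 \<le> N f" "N (\<lambda>_. 0) = 0"
    "\<And>c f. f \<in> X \<Longrightarrow> N (\<lambda>z. c * f z) = norm c * N f"
  using assms unfolding banach_subspace_def by auto

lemma dual_le:
  assumes bs: "banach_subspace X N" and d: "in_dual X N \<phi>" and f: "f \<in> X"
  shows "norm (\<phi> f) \<le> dual_norm X N \<phi> * N f"
proof -
  obtain C where C: "\<forall>f\<in>X. norm (\<phi> f) \<le> C * N f" using d unfolding in_dual_def by blast
  have sc: "\<And>c f. f \<in> X \<Longrightarrow> \<phi> (\<lambda>z. c * f z) = c * \<phi> f" using d unfolding in_dual_def by blast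
  have bdd: "bdd_above ((\<lambda>f. norm (\<phi> f)) ` {f\<in>X. N f \<le> 1})"
  proof (rule bdd_aboveI2)
    fix g assume g: "g \<in> {f\<in>X. N f \<le> 1}"
    have "norm (\<phi> g) \<le> C * N g" using C g by auto
    also have "\<dots> \<le> \<bar>C\<bar> * N g" using g bs_facts(4)[OF bs, of g]
      by (intro mult_right_mono) auto
    also have "\<dots> \<le> \<bar>C\<bar> * 1" using g
      by (intro mult_left_mono) auto
    finally show "norm (\<phi> g) \<le> \<bar>C\<bar>" by simp
  qed
  have N0: "0 \<le> N f" using bs_facts(4)[OF bs f] .
  show ?thesis
  proof (cases "N f = 0")
    case True
    then show ?thesis using C f by (metis mult_zero_right norm_le_zero_iff)
  next
    case False
    hence pos: "N f > 0" using N0 by simp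
    define c where "c = complex_of_real (1 / N f)"
    define g where "g = (\<lambda>z. c * f z)"
    have gX: "g \<in> X" unfolding g_def using bs_facts(3)[OF bs f] .
    have nc: "norm c = 1 / N f" using pos unfolding c_def norm_of_real by simp
    have Ng: "N g = 1" unfolding g_def using bs_facts(6)[OF bs f, of c] pos nc
      by simp
    have "norm (\<phi> g) \<le> dual_norm X N \<phi>" unfolding dual_norm_def
      by (rule cSUP_upper[OF _ bdd]) (use gX Ng in auto)
    moreover have "norm (\<phi> g) = norm (\<phi> f) / N f" unfolding g_def
      using sc[OF f, of c] nc by (simp only: norm_mult) simp
    ultimately show ?thesis using pos by (simp add: field_simps)
  qed
qed

lemma dual_norm_le:
  assumes bs: "banach_subspace X N" and K: "\<And>f. f \<in> X \<Longrightarrow> norm (\<phi> f) \<le> K * N f" and K0: "0 \<le> K"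
  shows "dual_norm X N \<phi> \<le> K"
  unfolding dual_norm_def
proof (rule cSUP_least)
  show "{f \<in> X. N f \<le> 1} \<noteq> {}" using bs_facts(2,5)[OF bs] by auto
next
  fix f assume "f \<in> {f \<in> X. N f \<le> 1}"
  then show "norm (\<phi> f) \<le> K" using K[of f] K0 bs_facts(4)[OF bs, of f]
    by (metis mem_Collect_eq mult_left_le order_trans)
qed

lemma dual_norm_nonneg:
  assumes bs: "banach_subspace X N" and d: "in_dual X N \<phi>"
  shows "0 \<le> dual_norm X N \<phi>"
proof -
  obtain C where C: "\<forall>f\<in>X. norm (\<phi> f) \<le> C * N f" using d unfolding in_dual_def by blast
  have bdd: "bdd_above ((\<lambda>f. norm (\<phi> f)) ` {f\<in>X. N f \<le> 1})"
  proof (rule bdd_aboveI2)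
    fix g assume g: "g \<in> {f\<in>X. N f \<le> 1}"
    have "norm (\<phi> g) \<le> C * N g" using C g by auto
    also have "\<dots> \<le> \<bar>C\<bar> * N g" using g bs_facts(4)[OF bs, of g]
      by (intro mult_right_mono) auto
    also have "\<dots> \<le> \<bar>C\<bar> * 1" using g
      by (intro mult_left_mono) auto
    finally show "norm (\<phi> g) \<le> \<bar>C\<bar>" by simp
  qed
  have "norm (\<phi> (\<lambda>_. 0)) \<le> dual_norm X N \<phi>" unfolding dual_norm_def
    by (rule cSUP_upper[OF _ bdd]) (use bs_facts(2,5)[OF bs] in auto)
  then show ?thesis by (meson norm_ge_zero order_trans)
qed

lemma lin_val:
  assumes T: "linear_HD T" and bs: "banach_subspace X N" and z: "z \<in> disk"
  shows "in_dual X N (\<lambda>f. T f z) \<longleftrightarrow> (\<exists>C. \<forall>f\<in>X. norm (T f z) \<le> C * N f)"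
proof -
  have X: "X \<subseteq> holD" using bs_facts(1)[OF bs] .
  have add: "\<forall>f\<in>X. \<forall>g\<in>X. T (\<lambda>z. f z + g z) z = T f z + T g z"
    using T X z unfolding linear_HD_def by (meson subsetD)
  have mul: "\<forall>c. \<forall>f\<in>X. T (\<lambda>z. c * f z) z = c * T f z"
    using T X z unfolding linear_HD_def by (meson subsetD)
  show ?thesis unfolding in_dual_def using add mul by simp
qed

lemma deriv_lin:
  assumes T: "linear_HD T" and f: "f \<in> holD" and g: "g \<in> holD" and z: "z \<in> disk"
  shows "deriv (T (\<lambda>w. f w + g w)) z = deriv (T f) z + deriv (T g) z"
    "deriv (T (\<lambda>w. c * f w)) z = c * deriv (T f) z"
proof -
  have Tadd: "\<And>w. w \<in> disk \<Longrightarrow> T (\<lambda>w. f w + g w) w = T f w + T g w"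
    using T f g unfolding linear_HD_def by blast
  have Tmul: "\<And>w. w \<in> disk \<Longrightarrow> T (\<lambda>w. c * f w) w = c * T f w"
    using T f unfolding linear_HD_def by blast
  have hf: "T f holomorphic_on disk" and hg: "T g holomorphic_on disk"
    using T f g unfolding linear_HD_def holD_def by auto
  have ev: "eventually (\<lambda>w. w \<in> disk) (nhds z)" using z by (intro eventually_nhds_in_open) auto
  have df: "T f field_differentiable at z" "T g field_differentiable at z"
    using hf hg z holomorphic_on_imp_differentiable_at by auto
  have "eventually (\<lambda>w. T (\<lambda>w. f w + g w) w = T f w + T g w) (nhds z)"
    using ev Tadd Tmul by (simp add: eventually_mono)
  hence "deriv (T (\<lambda>w. f w + g w)) z = deriv (\<lambda>w. T f w + T g w) z"
    by (rule deriv_cong_ev) simp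
  then show "deriv (T (\<lambda>w. f w + g w)) z = deriv (T f) z + deriv (T g) z"
    using df by simp
  have "eventually (\<lambda>w. T (\<lambda>w. c * f w) w = c * T f w) (nhds z)"
    using ev Tadd Tmul by (simp add: eventually_mono)
  hence "deriv (T (\<lambda>w. c * f w)) z = deriv (\<lambda>w. c * T f w) z"
    by (rule deriv_cong_ev) simp
  then show "deriv (T (\<lambda>w. c * f w)) z = c * deriv (T f) z"
    using df by simp
qed

lemma lin_der:
  assumes T: "linear_HD T" and bs: "banach_subspace X N" and z: "z \<in> disk"
  shows "in_dual X N (\<lambda>f. deriv (T f) z) \<longleftrightarrow> (\<exists>C. \<forall>f\<in>X. norm (deriv (T f) z) \<le> C * N f)"
proof -
  have X: "X \<subseteq> holD" using bs_facts(1)[OF bs] .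
  have add: "\<forall>f\<in>X. \<forall>g\<in>X. deriv (T (\<lambda>z. f z + g z)) z = deriv (T f) z + deriv (T g) z"
    using deriv_lin(1)[OF T _ _ z] X by (meson subsetD)
  have mul: "\<forall>c. \<forall>f\<in>X. deriv (T (\<lambda>z. c * f z)) z = c * deriv (T f) z"
    using deriv_lin(2)[OF T _ _ z] X by (meson subsetD)
  show ?thesis unfolding in_dual_def using add mul by simp
qed


lemma vpos: "radial_weight v \<Longrightarrow> z \<in> disk \<Longrightarrow> 0 < v z"
  unfolding radial_weight_def weight_def by blast

lemma sup_upper_disk:
  fixes h :: "complex \<Rightarrow> real"
  assumes "bdd_above ((\<lambda>z. h z) ` disk)" "z \<in> disk"
  shows "h z \<le> (SUP z\<in>disk. h z)"
  by (rule cSUP_upper) (use assms in auto)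

lemma sup_least_disk:
  fixes h :: "complex \<Rightarrow> real"
  assumes "\<And>z. z \<in> disk \<Longrightarrow> h z \<le> K"
  shows "(SUP z\<in>disk. h z) \<le> K"
proof (rule cSUP_least)
  show "disk \<noteq> {}" by (metis centre_in_ball empty_iff zero_less_one)
qed (use assms in auto)

lemma part1:
  assumes T: "linear_HD T" and bs: "banach_subspace X N" and rv: "radial_weight v"
  shows "maps_boundedly T X N (Hv v) (Hv_norm v) \<longleftrightarrow>
           (\<forall>z\<in>disk. in_dual X N (\<lambda>f. T f z)) \<and>
           bdd_above ((\<lambda>z. v z * dual_norm X N (\<lambda>f. T f z)) ` disk)"
proof
  assume "maps_boundedly T X N (Hv v) (Hv_norm v)"
  then obtain C where inH: "\<forall>f\<in>X. T f \<in> Hv v" and C: "\<forall>f\<in>X. Hv_norm v (T f) \<le> C * N f"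
    unfolding maps_boundedly_def by blast
  define K where "K = max C 0"
  have key: "norm (T f z) \<le> (K / v z) * N f" if f: "f \<in> X" and z: "z \<in> disk" for f z
  proof -
    have "v z * norm (T f z) \<le> Hv_norm v (T f)" unfolding Hv_norm_def
      by (rule sup_upper_disk) (use inH f z in \<open>auto simp: Hv_def\<close>)
    also have "\<dots> \<le> C * N f" using C f by auto
    also have "\<dots> \<le> K * N f" unfolding K_def using bs_facts(4)[OF bs f]
      by (simp add: mult_right_mono)
    finally show ?thesis using vpos[OF rv z] by (simp add: field_simps)
  qed
  have d: "\<forall>z\<in>disk. in_dual X N (\<lambda>f. T f z)"
    using key lin_val[OF T bs] by blast
  moreover have "bdd_above ((\<lambda>z. v z * dual_norm X N (\<lambda>f. T f z)) ` disk)"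
  proof (rule bdd_aboveI2)
    fix z :: complex assume z: "z \<in> disk"
    have "dual_norm X N (\<lambda>f. T f z) \<le> K / v z"
      by (rule dual_norm_le[OF bs]) (use key z vpos[OF rv z] K_def in auto)
    then show "v z * dual_norm X N (\<lambda>f. T f z) \<le> K" using vpos[OF rv z]
      by (simp add: field_simps)
  qed
  ultimately show "(\<forall>z\<in>disk. in_dual X N (\<lambda>f. T f z)) \<and>
           bdd_above ((\<lambda>z. v z * dual_norm X N (\<lambda>f. T f z)) ` disk)" by blast
next
  assume A: "(\<forall>z\<in>disk. in_dual X N (\<lambda>f. T f z)) \<and>
           bdd_above ((\<lambda>z. v z * dual_norm X N (\<lambda>f. T f z)) ` disk)"
  then obtain B where B: "\<And>z. z \<in> disk \<Longrightarrow> v z * dual_norm X N (\<lambda>f. T f z) \<le> B"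
    unfolding bdd_above_def by fastforce
  have key: "v z * norm (T f z) \<le> B * N f" if f: "f \<in> X" and z: "z \<in> disk" for f z
  proof -
    have "v z * norm (T f z) \<le> v z * (dual_norm X N (\<lambda>f. T f z) * N f)"
      using dual_le[OF bs _ f, of "\<lambda>f. T f z"] A z vpos[OF rv z] by auto
    also have "\<dots> \<le> B * N f" using B[OF z] bs_facts(4)[OF bs f]
      by (simp add: mult.assoc[symmetric] mult_right_mono)
    finally show ?thesis .
  qed
  have hol: "T f holomorphic_on disk" if "f \<in> X" for f
    using T bs_facts(1)[OF bs] that unfolding linear_HD_def holD_def by auto
  show "maps_boundedly T X N (Hv v) (Hv_norm v)"
    unfolding maps_boundedly_def
  proof (intro conjI exI ballI)
    fix f assume f: "f \<in> X"
    show "T f \<in> Hv v" unfolding Hv_def using hol[OF f] key[OF f]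
      by (auto intro!: bdd_aboveI2)
    show "Hv_norm v (T f) \<le> B * N f" unfolding Hv_norm_def
      by (rule sup_least_disk) (use key f in auto)
  qed
qed

lemma part2:
  assumes T: "linear_HD T" and bs: "banach_subspace X N" and rv: "radial_weight v"
  shows "maps_boundedly T X N (Bv v) (Bv_norm v) \<longleftrightarrow>
           in_dual X N (\<lambda>f. T f 0) \<and>
           (\<forall>z\<in>disk. in_dual X N (\<lambda>f. deriv (T f) z)) \<and>
           bdd_above ((\<lambda>z. v z * dual_norm X N (\<lambda>f. deriv (T f) z)) ` disk)"
proof
  have z0: "(0::complex) \<in> disk" by simp
  assume "maps_boundedly T X N (Bv v) (Bv_norm v)"
  then obtain C where inB: "\<forall>f\<in>X. T f \<in> Bv v" and C: "\<forall>f\<in>X. Bv_norm v (T f) \<le> C * N f"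
    unfolding maps_boundedly_def by blast
  define K where "K = max C 0"
  have CK: "Bv_norm v (T f) \<le> K * N f" if f: "f \<in> X" for f
  proof -
    have "Bv_norm v (T f) \<le> C * N f" using C f by auto
    also have "\<dots> \<le> K * N f" unfolding K_def using bs_facts(4)[OF bs f]
      by (simp add: mult_right_mono)
    finally show ?thesis .
  qed
  have supge: "v z * norm (deriv (T f) z) \<le> (SUP z\<in>disk. v z * norm (deriv (T f) z))"
    if f: "f \<in> X" and z: "z \<in> disk" for f z
    by (rule sup_upper_disk) (use inB f z in \<open>auto simp: Bv_def\<close>)
  have key: "norm (deriv (T f) z) \<le> (K / v z) * N f" if f: "f \<in> X" and z: "z \<in> disk" for f z
  proof -
    have "0 \<le> v 0 * norm (deriv (T f) 0)" using vpos[OF rv z0] by simp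
    also have "\<dots> \<le> (SUP z\<in>disk. v z * norm (deriv (T f) z))" using supge[OF f z0] .
    finally have s0: "0 \<le> (SUP z\<in>disk. v z * norm (deriv (T f) z))" .
    have "v z * norm (deriv (T f) z) \<le> Bv_norm v (T f)" unfolding Bv_norm_def
      using supge[OF f z] norm_ge_zero[of "T f 0"] by linarith
    also have "\<dots> \<le> K * N f" using CK f by auto
    finally show ?thesis using vpos[OF rv z] by (simp add: field_simps)
  qed
  have key0: "norm (T f 0) \<le> K * N f" if f: "f \<in> X" for f
  proof -
    have "0 \<le> v 0 * norm (deriv (T f) 0)" using vpos[OF rv z0] by simp
    also have "\<dots> \<le> (SUP z\<in>disk. v z * norm (deriv (T f) z))" using supge[OF f z0] .
    finally have "norm (T f 0) \<le> Bv_norm v (T f)" unfolding Bv_norm_def by simp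
    also have "\<dots> \<le> K * N f" using CK f by auto
    finally show ?thesis .
  qed
  have d0: "in_dual X N (\<lambda>f. T f 0)"
    using key0 lin_val[OF T bs z0] by blast
  have d: "\<forall>z\<in>disk. in_dual X N (\<lambda>f. deriv (T f) z)"
    using key lin_der[OF T bs] by blast
  moreover have "bdd_above ((\<lambda>z. v z * dual_norm X N (\<lambda>f. deriv (T f) z)) ` disk)"
  proof (rule bdd_aboveI2)
    fix z :: complex assume z: "z \<in> disk"
    have "dual_norm X N (\<lambda>f. deriv (T f) z) \<le> K / v z"
      by (rule dual_norm_le[OF bs]) (use key z vpos[OF rv z] K_def in auto)
    then show "v z * dual_norm X N (\<lambda>f. deriv (T f) z) \<le> K" using vpos[OF rv z]
      by (simp add: field_simps)
  qed
  ultimately show "in_dual X N (\<lambda>f. T f 0) \<and> (\<forall>z\<in>disk. in_dual X N (\<lambda>f. deriv (T f) z)) \<and>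
           bdd_above ((\<lambda>z. v z * dual_norm X N (\<lambda>f. deriv (T f) z)) ` disk)" using d0 by blast
next
  assume A: "in_dual X N (\<lambda>f. T f 0) \<and> (\<forall>z\<in>disk. in_dual X N (\<lambda>f. deriv (T f) z)) \<and>
           bdd_above ((\<lambda>z. v z * dual_norm X N (\<lambda>f. deriv (T f) z)) ` disk)"
  then obtain B where B: "\<And>z. z \<in> disk \<Longrightarrow> v z * dual_norm X N (\<lambda>f. deriv (T f) z) \<le> B"
    unfolding bdd_above_def by fastforce
  obtain C0 where C0: "\<forall>f\<in>X. norm (T f 0) \<le> C0 * N f"
    using A unfolding in_dual_def by blast
  have key: "v z * norm (deriv (T f) z) \<le> B * N f" if f: "f \<in> X" and z: "z \<in> disk" for f z
  proof -
    have "v z * norm (deriv (T f) z) \<le> v z * (dual_norm X N (\<lambda>f. deriv (T f) z) * N f)"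
      using dual_le[OF bs _ f, of "\<lambda>f. deriv (T f) z"] A z vpos[OF rv z] by auto
    also have "\<dots> \<le> B * N f" using B[OF z] bs_facts(4)[OF bs f]
      by (simp add: mult.assoc[symmetric] mult_right_mono)
    finally show ?thesis .
  qed
  have hol: "T f holomorphic_on disk" if "f \<in> X" for f
    using T bs_facts(1)[OF bs] that unfolding linear_HD_def holD_def by auto
  show "maps_boundedly T X N (Bv v) (Bv_norm v)"
    unfolding maps_boundedly_def
  proof (intro conjI exI ballI)
    fix f assume f: "f \<in> X"
    show "T f \<in> Bv v" unfolding Bv_def using hol[OF f] key[OF f]
      by (auto intro!: bdd_aboveI2)
    have "(SUP z\<in>disk. v z * norm (deriv (T f) z)) \<le> B * N f"
      by (rule sup_least_disk) (use key f in auto)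
    then show "Bv_norm v (T f) \<le> (C0 + B) * N f" unfolding Bv_norm_def
      using C0 f by (simp only: distrib_right) (meson add_mono bspec)
  qed
qed

theorem theorem2p1:
  fixes T :: "(complex \<Rightarrow> complex) \<Rightarrow> (complex \<Rightarrow> complex)"
    and X :: "(complex \<Rightarrow> complex) set"
    and N :: "(complex \<Rightarrow> complex) \<Rightarrow> real"
    and v :: "complex \<Rightarrow> real"
  assumes "linear_HD T"
    and "banach_subspace X N"
    and "radial_weight v"
  shows "(maps_boundedly T X N (Hv v) (Hv_norm v) \<longleftrightarrow>
           (\<forall>z\<in>disk. in_dual X N (\<lambda>f. T f z)) \<and>
           bdd_above ((\<lambda>z. v z * dual_norm X N (\<lambda>f. T f z)) ` disk)) \<and>
         (maps_boundedly T X N (Bv v) (Bv_norm v) \<longleftrightarrow>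
           in_dual X N (\<lambda>f. T f 0) \<and>
           (\<forall>z\<in>disk. in_dual X N (\<lambda>f. deriv (T f) z)) \<and>
           bdd_above ((\<lambda>z. v z * dual_norm X N (\<lambda>f. deriv (T f) z)) ` disk))"
  using part1[OF assms] part2[OF assms] by blast

end
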